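(* Let $\Omega\subset\mathbb{R}^{n+1}$ be a compact convex body with $C^1$ boundary, fix $\Theta\in[\frac12,1)$ and let $r_\Theta>0$ satisfy $\omega_\Omega(r_\Theta)<\sqrt{2-2\Theta}$. Fix $X_0\in\partial\Omega$, choose orthonormal coordinates with $\mathcal{N}_\Omega(X_0)=e_{n+1}$, let $x_0\in\mathbb{R}^n$ be the first $n$ coordinates of $X_0$, and let $\beta_{X_0}:\Omega_{X_0}\to\mathbb{R}$ be the concave function whose graph is $\partial\Omega^+(X_0)$. Then for every $x_1\in B^n_{r_\Theta/4}(x_0)$ and every $x_2\in\Omega_{X_0}$, $$|\beta_{X_0}(x_1)-\beta_{X_0}(x_2)|\le\frac{4\,\mathrm{diam}(\Omega)}{r_\Theta}|x_1-x_2|.$$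
   Context: $\mathcal{N}_\Omega(X)$ is the outward unit normal at $X\in\partial\Omega$; $\omega_\Omega(r):=\sup\{|\mathcal{N}_\Omega(X_1)-\mathcal{N}_\Omega(X_2)|: X_1,X_2\in\partial\Omega,|X_1-X_2|<r\}$. $\partial\Omega^+(X_0):=\{X\in\partial\Omega\mid\langle\mathcal{N}_\Omega(X),\mathcal{N}_\Omega(X_0)\rangle>0\}$. In coordinates where $\mathcal{N}_\Omega(X_0)=e_{n+1}$, the orthogonal projection of $\partial\Omega^+(X_0)$ to $\mathbb{R}^n$ (the first $n$ coordinates) is an open bounded convex set $\Omega_{X_0}$, and $\partial\Omega^+(X_0)=\{(x,\beta_{X_0}(x)):x\in\Omega_{X_0}\}$ for a $C^1$ concave function $\beta_{X_0}$. *)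

theory Defs
  imports "HOL-Analysis.Analysis"
begin

text \<open>Ambient space R^(n+1) is modelled as the Euclidean space (real^'n) \<times> real
  (first n coordinates, last coordinate).\<close>

definition convex_body :: "'a::euclidean_space set \<Rightarrow> bool" where
  "convex_body \<Omega> \<longleftrightarrow> compact \<Omega> \<and> convex \<Omega> \<and> interior \<Omega> \<noteq> {}"

definition local_C1_defining ::
  "'a::euclidean_space set \<Rightarrow> 'a set \<Rightarrow> ('a \<Rightarrow> real) \<Rightarrow> ('a \<Rightarrow> 'a) \<Rightarrow> bool" where
  "local_C1_defining \<Omega> U \<rho> G \<longleftrightarrow>
     open U \<and>
     (\<forall>Y\<in>U. (\<rho> has_derivative (\<lambda>h. G Y \<bullet> h)) (at Y)) \<and>
     continuous_on U G \<and>
     \<Omega> \<inter> U = {Y\<in>U. \<rho> Y \<le> 0} \<and>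
     (\<forall>Y\<in>U \<inter> frontier \<Omega>. G Y \<noteq> 0)"

definition C1_boundary :: "'a::euclidean_space set \<Rightarrow> bool" where
  "C1_boundary \<Omega> \<longleftrightarrow>
     (\<forall>X\<in>frontier \<Omega>. \<exists>U \<rho> G. X \<in> U \<and> local_C1_defining \<Omega> U \<rho> G)"

definition outward_normal :: "'a::euclidean_space set \<Rightarrow> 'a \<Rightarrow> 'a" where
  "outward_normal \<Omega> X =
     (THE \<nu>. \<exists>U \<rho> G. X \<in> U \<and> local_C1_defining \<Omega> U \<rho> G \<and> \<nu> = G X /\<^sub>R norm (G X))"

definition normal_modulus :: "'a::euclidean_space set \<Rightarrow> real \<Rightarrow> real" where
  "normal_modulus \<Omega> r =
     Sup {norm (outward_normal \<Omega> X1 - outward_normal \<Omega> X2) | X1 X2.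
            X1 \<in> frontier \<Omega> \<and> X2 \<in> frontier \<Omega> \<and> norm (X1 - X2) < r}"

definition upper_boundary :: "'a::euclidean_space set \<Rightarrow> 'a \<Rightarrow> 'a set" where
  "upper_boundary \<Omega> X0 =
     {X \<in> frontier \<Omega>. outward_normal \<Omega> X \<bullet> outward_normal \<Omega> X0 > 0}"

text \<open>Given orthonormal coordinates Q (an orthogonal transformation of R^(n+1) =
  (real^'n) \<times> real), the projection of the upper boundary onto the first n
  coordinates, and the function beta whose graph is the upper boundary.\<close>
definition proj_domain ::
  "((real^'n) \<times> real) set \<Rightarrow> ((real^'n) \<times> real \<Rightarrow> (real^'n) \<times> real)
     \<Rightarrow> (real^'n) \<times> real \<Rightarrow> (real^'n) set" where
  "proj_domain \<Omega> Q X0 = fst ` Q ` upper_boundary \<Omega> X0"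

definition graph_fun ::
  "((real^'n) \<times> real) set \<Rightarrow> ((real^'n) \<times> real \<Rightarrow> (real^'n) \<times> real)
     \<Rightarrow> (real^'n) \<times> real \<Rightarrow> real^'n \<Rightarrow> real" where
  "graph_fun \<Omega> Q X0 x = (THE t. (x, t) \<in> Q ` upper_boundary \<Omega> X0)"

end

theory Submission
  imports Defs
begin


lemma rho_zero:
  fixes \<Omega> :: "'a::euclidean_space set"
  assumes cl: "closed \<Omega>" and X: "X \<in> frontier \<Omega>" and XU: "X \<in> U"
    and D: "local_C1_defining \<Omega> U \<rho> G"
  shows "\<rho> X = 0"
proof -
  have XO: "X \<in> \<Omega>" using X cl by (simp add: frontier_def)
  have oU: "open U" and der: "(\<rho> has_derivative (\<lambda>h. G X \<bullet> h)) (at X)"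
    and eq: "\<Omega> \<inter> U = {Y\<in>U. \<rho> Y \<le> 0}" using D XU unfolding local_C1_defining_def by auto
  have "X \<in> {Y\<in>U. \<rho> Y \<le> 0}" using eq XO XU by blast
  then have le: "\<rho> X \<le> 0" by simp
  show ?thesis
  proof (rule ccontr)
    assume "\<rho> X \<noteq> 0"
    then have neg: "\<rho> X < 0" using le by auto
    have "isCont \<rho> X" using der by (rule has_derivative_continuous)
    then obtain e1 where e1': "e1 > 0" "\<forall>Y. dist Y X < e1 \<longrightarrow> dist (\<rho> Y) (\<rho> X) < - \<rho> X"
      using neg unfolding continuous_at_eps_delta by (meson neg_0_less_iff_less)
    have e1: "e1 > 0" "\<forall>Y. dist Y X < e1 \<longrightarrow> \<rho> Y < 0"
    proof -
      show "e1 > 0" by (rule e1'(1))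
      show "\<forall>Y. dist Y X < e1 \<longrightarrow> \<rho> Y < 0"
      proof (intro allI impI)
        fix Y assume "dist Y X < e1"
        then have "dist (\<rho> Y) (\<rho> X) < - \<rho> X" using e1' by blast
        then show "\<rho> Y < 0" by (simp add: dist_real_def abs_less_iff)
      qed
    qed
    obtain e2 where e2: "e2 > 0" "ball X e2 \<subseteq> U" using oU XU open_contains_ball by blast
    have "ball X (min e1 e2) \<subseteq> \<Omega>"
    proof
      fix Y assume "Y \<in> ball X (min e1 e2)"
      then have "Y \<in> U" "\<rho> Y < 0" using e1 e2 by (auto simp: dist_commute)
      then have "Y \<in> {Y\<in>U. \<rho> Y \<le> 0}" by simp
      then show "Y \<in> \<Omega>" using eq by blast
    qed
    then have "X \<in> interior \<Omega>" using e1 e2 by (meson centre_in_ball min_less_iff_conj mem_interior)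
    then show False using X by (simp add: frontier_def)
  qed
qed

lemma deriv_line:
  fixes \<rho> :: "'a::euclidean_space \<Rightarrow> real"
  assumes der: "(\<rho> has_derivative (\<lambda>h. g \<bullet> h)) (at X)"
  shows "((\<lambda>s. \<rho> (X + s *\<^sub>R h)) has_real_derivative (g \<bullet> h)) (at 0)"
proof -
  have d1: "((\<lambda>s::real. X + s *\<^sub>R h) has_derivative (\<lambda>s. s *\<^sub>R h)) (at 0)"
    by (auto intro!: derivative_eq_intros)
  have der': "(\<rho> has_derivative (\<lambda>h. g \<bullet> h)) (at (X + 0 *\<^sub>R h))" using der by simp
  have "((\<lambda>s. \<rho> (X + s *\<^sub>R h)) has_derivative (\<lambda>s. g \<bullet> (s *\<^sub>R h))) (at 0)"
    using diff_chain_at[OF d1 der'] by (simp add: o_def)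
  moreover have "(\<lambda>s. g \<bullet> (s *\<^sub>R h)) = (*) (g \<bullet> h)" by (rule ext) simp
  ultimately show ?thesis unfolding has_field_derivative_def by simp
qed

lemma normal_support_unique:
  fixes \<Omega> :: "'a::euclidean_space set"
  assumes cl: "closed \<Omega>" and cv: "convex \<Omega>" and X: "X \<in> frontier \<Omega>" and XU: "X \<in> U"
    and D: "local_C1_defining \<Omega> U \<rho> G"
  shows "norm (G X /\<^sub>R norm (G X)) = 1"
    and "\<forall>Y\<in>\<Omega>. (G X /\<^sub>R norm (G X)) \<bullet> (Y - X) \<le> 0"
    and "\<forall>v. norm v = 1 \<and> (\<forall>Y\<in>\<Omega>. v \<bullet> (Y - X) \<le> 0) \<longrightarrow> v = G X /\<^sub>R norm (G X)"
proof -
  have XO: "X \<in> \<Omega>" using X cl by (simp add: frontier_def)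
  have oU: "open U" and der: "(\<rho> has_derivative (\<lambda>h. G X \<bullet> h)) (at X)"
    and eq: "\<Omega> \<inter> U = {Y\<in>U. \<rho> Y \<le> 0}" and GX: "G X \<noteq> 0"
    using D XU X unfolding local_C1_defining_def by auto
  have r0: "\<rho> X = 0" by (rule rho_zero[OF cl X XU D])
  obtain e2 where e2: "e2 > 0" "ball X e2 \<subseteq> U" using oU XU open_contains_ball by blast
  have inU: "X + s *\<^sub>R h \<in> U" if "0 \<le> s" "s < e2 / (norm h + 1)" for s h
  proof -
    have "norm (s *\<^sub>R h) = s * norm h" using that by simp
    also have "\<dots> \<le> s * (norm h + 1)" using that by (simp add: mult_left_mono)
    also have "\<dots> < e2" using that(2) pos_less_divide_eq[of "norm h + 1" s e2]
      by (simp add: add_nonneg_pos)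
    finally show ?thesis using e2 by (auto simp: dist_norm)
  qed
  show "norm (G X /\<^sub>R norm (G X)) = 1" using GX by simp
  have sup: "G X \<bullet> (Y - X) \<le> 0" if Y: "Y \<in> \<Omega>" for Y
  proof (rule ccontr)
    assume "\<not> ?thesis"
    then have pos: "G X \<bullet> (Y - X) > 0" by simp
    obtain d where d: "d > 0" "\<forall>s>0. s < d \<longrightarrow> \<rho> (X + 0 *\<^sub>R (Y - X)) < \<rho> (X + (0 + s) *\<^sub>R (Y - X))"
      using DERIV_pos_inc_right[OF deriv_line[OF der, of "Y - X"] pos] by blast
    define E where "E = e2 / (norm (Y - X) + 1)"
    have E: "E > 0" using e2 by (simp add: E_def add_nonneg_pos)
    define s where "s = min (d/2) (min (1/2) (E / 2))"
    have s: "s > 0" "s < d" "s \<le> 1" "s < e2 / (norm (Y - X) + 1)"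
      using d E unfolding s_def E_def[symmetric] by auto
    have "\<rho> (X + s *\<^sub>R (Y - X)) > 0" using d s r0 by auto
    moreover have "X + s *\<^sub>R (Y - X) \<in> U" using inU s by auto
    moreover have "X + s *\<^sub>R (Y - X) \<in> \<Omega>"
    proof -
      have "(1 - s) *\<^sub>R X + s *\<^sub>R Y \<in> \<Omega>" using cv XO Y s by (simp add: convexD_alt)
      moreover have "(1 - s) *\<^sub>R X + s *\<^sub>R Y = X + s *\<^sub>R (Y - X)" by (simp add: algebra_simps)
      ultimately show ?thesis by simp
    qed
    ultimately have "X + s *\<^sub>R (Y - X) \<in> {Y\<in>U. \<rho> Y \<le> 0}" using eq by blast
    then show False using \<open>\<rho> (X + s *\<^sub>R (Y - X)) > 0\<close> by simp
  qed
  then show "\<forall>Y\<in>\<Omega>. (G X /\<^sub>R norm (G X)) \<bullet> (Y - X) \<le> 0"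
    by (simp add: mult_nonneg_nonpos)
  show "\<forall>v. norm v = 1 \<and> (\<forall>Y\<in>\<Omega>. v \<bullet> (Y - X) \<le> 0) \<longrightarrow> v = G X /\<^sub>R norm (G X)"
  proof (intro allI impI, rule ccontr)
    fix v assume v: "norm v = 1 \<and> (\<forall>Y\<in>\<Omega>. v \<bullet> (Y - X) \<le> 0)" and ne: "v \<noteq> G X /\<^sub>R norm (G X)"
    define g where "g = G X /\<^sub>R norm (G X)"
    have ng: "norm g = 1" using GX by (simp add: g_def)
    have vv: "v \<bullet> v = 1" "g \<bullet> g = 1" using v ng norm_eq_1 by auto
    have "0 < (norm (v - g))^2" using ne by (simp add: g_def)
    also have "(norm (v - g))^2 = 2 - 2 * (v \<bullet> g)"
      using vv by (simp add: power2_norm_eq_inner inner_diff_left inner_diff_right inner_commute[of g v])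
    finally have vg: "v \<bullet> g < 1" by simp
    define h where "h = v - g"
    have vh: "v \<bullet> h > 0" using vg vv by (simp add: h_def inner_diff_right)
    have "g \<bullet> h = g \<bullet> v - 1" using vv by (simp add: h_def inner_diff_right)
    then have gh: "g \<bullet> h < 0" using vg by (simp add: inner_commute[of g v])
    have Gh: "G X \<bullet> h < 0"
    proof -
      have "G X \<bullet> h = norm (G X) * (g \<bullet> h)" unfolding g_def using GX by simp
      then show ?thesis using gh GX by (simp add: mult_pos_neg)
    qed
    obtain d where d: "d > 0" "\<forall>s>0. s < d \<longrightarrow> \<rho> (X + 0 *\<^sub>R h) > \<rho> (X + (0 + s) *\<^sub>R h)"
      using DERIV_neg_dec_right[OF deriv_line[OF der, of h] Gh] by blast
    define E where "E = e2 / (norm h + 1)"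
    have E: "E > 0" using e2 by (simp add: E_def add_nonneg_pos)
    define s where "s = min (d/2) (E / 2)"
    have s: "s > 0" "s < d" "s < e2 / (norm h + 1)"
      using d E unfolding s_def E_def[symmetric] by auto
    have "\<rho> (X + s *\<^sub>R h) < 0" using d s r0 by auto
    moreover have "X + s *\<^sub>R h \<in> U" using inU s by auto
    ultimately have "X + s *\<^sub>R h \<in> {Y\<in>U. \<rho> Y \<le> 0}" by simp
    then have "X + s *\<^sub>R h \<in> \<Omega>" using eq by blast
    then have "v \<bullet> (X + s *\<^sub>R h - X) \<le> 0" using v by blast
    moreover have "v \<bullet> (X + s *\<^sub>R h - X) = s * (v \<bullet> h)" by simp
    moreover have "s * (v \<bullet> h) > 0" using s vh by simp
    ultimately show False by linarith
  qed
qed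

lemma outward_normal_char:
  fixes \<Omega> :: "'a::euclidean_space set"
  assumes cl: "closed \<Omega>" and cv: "convex \<Omega>" and C1: "C1_boundary \<Omega>" and X: "X \<in> frontier \<Omega>"
  shows "norm (outward_normal \<Omega> X) = 1"
    and "\<forall>Y\<in>\<Omega>. outward_normal \<Omega> X \<bullet> (Y - X) \<le> 0"
    and "\<forall>v. norm v = 1 \<and> (\<forall>Y\<in>\<Omega>. v \<bullet> (Y - X) \<le> 0) \<longrightarrow> v = outward_normal \<Omega> X"
proof -
  obtain U0 \<rho>0 G0 where D: "X \<in> U0" "local_C1_defining \<Omega> U0 \<rho>0 G0" using C1 X unfolding C1_boundary_def by blast
  note P = normal_support_unique[OF cl cv X D]
  have eqN: "outward_normal \<Omega> X = G0 X /\<^sub>R norm (G0 X)"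
    unfolding outward_normal_def
  proof (rule the_equality)
    show "\<exists>U \<rho> G. X \<in> U \<and> local_C1_defining \<Omega> U \<rho> G \<and> G0 X /\<^sub>R norm (G0 X) = G X /\<^sub>R norm (G X)"
      using D by blast
    fix \<nu> assume "\<exists>U' \<rho>' G'. X \<in> U' \<and> local_C1_defining \<Omega> U' \<rho>' G' \<and> \<nu> = G' X /\<^sub>R norm (G' X)"
    then obtain U' \<rho>' G' where D': "X \<in> U'" "local_C1_defining \<Omega> U' \<rho>' G'" "\<nu> = G' X /\<^sub>R norm (G' X)" by blast
    note P' = normal_support_unique[OF cl cv X D'(1,2)]
    have "norm \<nu> = 1 \<and> (\<forall>Y\<in>\<Omega>. \<nu> \<bullet> (Y - X) \<le> 0)" using P'(1,2) D'(3) by simp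
    then show "\<nu> = G0 X /\<^sub>R norm (G0 X)" using P(3) by blast
  qed
  show "norm (outward_normal \<Omega> X) = 1" unfolding eqN by (rule P(1))
  show "\<forall>Y\<in>\<Omega>. outward_normal \<Omega> X \<bullet> (Y - X) \<le> 0" unfolding eqN by (rule P(2))
  show "\<forall>v. norm v = 1 \<and> (\<forall>Y\<in>\<Omega>. v \<bullet> (Y - X) \<le> 0) \<longrightarrow> v = outward_normal \<Omega> X"
    unfolding eqN by (rule P(3))
qed




lemma norm_sq_pair: "(norm (v::'a::euclidean_space \<times> real))^2 = (norm (fst v))^2 + (snd v)^2"
  by (cases v) (simp add: norm_Pair)

lemma inner_pair': "(v::'a::euclidean_space \<times> real) \<bullet> w = fst v \<bullet> fst w + snd v * snd w"
  by (cases v, cases w) simp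

lemma norm_add_sq: "(norm (a + b :: 'a::real_inner))^2 = (norm a)^2 + (norm b)^2 + 2 * (a \<bullet> b)"
  by (simp add: power2_norm_eq_inner inner_add_left inner_add_right inner_commute[of b a])

lemma abs_snd_le_norm: "\<bar>snd (v::'a::euclidean_space \<times> real)\<bar> \<le> norm v"
proof (rule power2_le_imp_le)
  show "\<bar>snd v\<bar>^2 \<le> (norm v)^2" using norm_sq_pair[of v] by simp
qed simp

lemma fst_bound:
  fixes v :: "'a::euclidean_space \<times> real"
  assumes "snd v > norm v / 2"
  shows "norm (fst v) \<le> sqrt 3 * snd v"
proof -
  have sp: "snd v > 0" using assms norm_ge_zero[of v] by linarith
  have "4 * (snd v)^2 > (norm v)^2"
  proof -
    have "norm v < 2 * snd v" using assms by linarith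
    then have "(norm v)^2 < (2 * snd v)^2" by (rule power_strict_mono) auto
    then show ?thesis by (simp add: power_mult_distrib)
  qed
  then have "(norm (fst v))^2 \<le> 3 * (snd v)^2" using norm_sq_pair[of v] by linarith
  then have "norm (fst v) \<le> sqrt (3 * (snd v)^2)" by (rule real_le_rsqrt)
  also have "\<dots> = sqrt 3 * snd v" using sp by (simp add: real_sqrt_mult)
  finally show ?thesis .
qed

locale geo =
  fixes S :: "('a::euclidean_space \<times> real) set" and \<nu> :: "'a \<times> real \<Rightarrow> 'a \<times> real"
    and P0 :: "'a \<times> real" and r :: real
  assumes cS: "compact S" and cvS: "convex S"
    and hN: "\<And>P. P \<in> frontier S \<Longrightarrow> norm (\<nu> P) = 1"
    and hS: "\<And>P W. P \<in> frontier S \<Longrightarrow> W \<in> S \<Longrightarrow> \<nu> P \<bullet> (W - P) \<le> 0"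
    and hU: "\<And>P v. P \<in> frontier S \<Longrightarrow> norm v = 1 \<Longrightarrow> (\<forall>W\<in>S. v \<bullet> (W - P) \<le> 0) \<Longrightarrow> v = \<nu> P"
    and P0: "P0 \<in> frontier S" and nP0: "\<nu> P0 = (0, 1)"
    and hM: "\<And>P. P \<in> frontier S \<Longrightarrow> norm (P - P0) < r \<Longrightarrow> snd (\<nu> P) > 1/2"
begin

lemma clS: "closed S" using cS by (rule compact_imp_closed)

lemma fr_in: "P \<in> frontier S \<Longrightarrow> P \<in> S"
  using clS by (simp add: frontier_def)

lemma P0S: "P0 \<in> S" using fr_in P0 by blast

lemma below_top: "W \<in> S \<Longrightarrow> snd W \<le> snd P0"
  using hS[OF P0, of W] nP0 by (simp add: inner_pair')

lemma slope:
  assumes P: "(xa, ta) \<in> frontier S" and g: "snd (\<nu> (xa, ta)) > 1/2" and W: "(xb, tb) \<in> S"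
  shows "tb - ta \<le> sqrt 3 * norm (xb - xa)"
proof -
  define f where "f = fst (\<nu> (xa, ta))"
  define g where "g = snd (\<nu> (xa, ta))"
  have "\<nu> (xa, ta) \<bullet> ((xb, tb) - (xa, ta)) \<le> 0" using hS[OF P W] .
  then have ineq: "f \<bullet> (xb - xa) + g * (tb - ta) \<le> 0" by (simp add: inner_pair' f_def g_def)
  have gn: "snd (\<nu> (xa, ta)) > norm (\<nu> (xa, ta)) / 2" using hN[OF P] g by simp
  have fb: "norm f \<le> sqrt 3 * g" using fst_bound[OF gn] by (simp add: f_def g_def)
  have "- (f \<bullet> (xb - xa)) \<le> norm f * norm (xb - xa)"
    using Cauchy_Schwarz_ineq2[of f "xb - xa"] by linarith
  also have "\<dots> \<le> sqrt 3 * g * norm (xb - xa)" using fb by (simp add: mult_right_mono)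
  finally have "g * (tb - ta) \<le> g * (sqrt 3 * norm (xb - xa))" using ineq by (simp add: algebra_simps)
  moreover have "g > 0" using g by (simp add: g_def)
  ultimately show ?thesis by simp
qed

lemma cone:
  assumes x: "norm (x - fst P0) < r / 2"
  shows "(x, snd P0 - sqrt 3 * norm (x - fst P0)) \<in> S"
proof (rule ccontr)
  define \<delta> where "\<delta> = norm (x - fst P0)"
  define Y where "Y = (x, snd P0 - sqrt 3 * \<delta>)"
  assume "(x, snd P0 - sqrt 3 * norm (x - fst P0)) \<notin> S"
  then have YS: "Y \<notin> S" by (simp add: Y_def \<delta>_def)
  define Z where "Z = closest_point S Y"
  have ZS: "Z \<in> S" using closest_point_in_set[OF clS, of Y] P0S by (auto simp: Z_def)
  have Zmin: "\<forall>W\<in>S. dist Y Z \<le> dist Y W" using closest_point_exists(2)[OF clS, of Y] P0S by (auto simp: Z_def)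
  define d where "d = Y - Z"
  have dne: "d \<noteq> 0" using YS ZS by (auto simp: d_def)
  have dsup: "d \<bullet> (W - Z) \<le> 0" if "W \<in> S" for W
    using any_closest_point_dot[OF cvS clS ZS that Zmin] by (simp add: d_def)
  have Zfr: "Z \<in> frontier S"
  proof -
    have "Z \<notin> interior S"
    proof
      assume "Z \<in> interior S"
      then obtain e where e: "e > 0" "ball Z e \<subseteq> S" using mem_interior by blast
      define W where "W = Z + (e / 2 / norm d) *\<^sub>R d"
      have "dist Z W = e / 2" using dne e by (simp add: W_def dist_norm)
      then have "W \<in> S" using e by auto
      then have "d \<bullet> (W - Z) \<le> 0" by (rule dsup)
      moreover have "d \<bullet> (W - Z) = (e / 2 / norm d) * (d \<bullet> d)" by (simp add: W_def)
      moreover have "(e / 2 / norm d) * (d \<bullet> d) > 0" using dne e by simp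
      ultimately show False by linarith
    qed
    then show ?thesis using ZS clS by (simp add: frontier_def)
  qed
  have nuZ: "\<nu> Z = d /\<^sub>R norm d"
  proof (rule hU[OF Zfr, symmetric])
    show "norm (d /\<^sub>R norm d) = 1" using dne by simp
    show "\<forall>W\<in>S. (d /\<^sub>R norm d) \<bullet> (W - Z) \<le> 0"
      using dsup by (simp add: mult_nonneg_nonpos)
  qed
  have dP0: "d \<bullet> (P0 - Z) \<le> 0" using dsup[OF P0S] .
  have YP0: "norm (Y - P0) < r"
  proof -
    have "(norm (Y - P0))^2 = \<delta>^2 + (sqrt 3 * \<delta>)^2"
      using norm_sq_pair[of "Y - P0"] by (simp add: Y_def \<delta>_def power2_eq_square)
    also have "\<dots> = (2 * \<delta>)^2" by (simp add: power_mult_distrib)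
    also have "\<dots> < r^2"
    proof (rule power_strict_mono)
      show "2 * \<delta> < r" using x \<delta>_def by simp
    qed (auto simp: \<delta>_def)
    finally have "(norm (Y - P0))^2 < r^2" .
    moreover have "r \<ge> 0" using x norm_ge_zero[of "x - fst P0"] by linarith
    ultimately show ?thesis by (rule power_less_imp_less_base)
  qed
  have ZP0: "norm (Z - P0) \<le> norm (Y - P0)"
  proof -
    have "Y - P0 = d + (Z - P0)" by (simp add: d_def)
    then have "(norm (Y - P0))^2 = (norm d)^2 + (norm (Z - P0))^2 + 2 * (d \<bullet> (Z - P0))"
      using norm_add_sq[of d "Z - P0"] by (simp only:)
    moreover have "d \<bullet> (Z - P0) = - (d \<bullet> (P0 - Z))" by (simp add: inner_diff_right)
    moreover have "(norm d)^2 \<ge> 0" by simp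
    ultimately have "(norm (Z - P0))^2 \<le> (norm (Y - P0))^2" using dP0 by linarith
    then show ?thesis by (rule power2_le_imp_le) simp
  qed
  have "snd (\<nu> Z) > 1/2" using hM[OF Zfr] YP0 ZP0 by linarith
  then have h1: "inverse (norm d) * snd d > 1/2" using nuZ by simp
  have npos: "norm d > 0" using dne by simp
  have "norm d * (1/2) < norm d * (inverse (norm d) * snd d)"
    by (rule mult_strict_left_mono[OF h1 npos])
  moreover have "norm d * (inverse (norm d) * snd d) = snd d" using npos by simp
  ultimately have sd: "snd d > norm d / 2" by linarith
  have fd: "norm (fst d) \<le> sqrt 3 * snd d" by (rule fst_bound[OF sd])
  have e0: "d \<bullet> (P0 - Z) = d \<bullet> (P0 - Y) + d \<bullet> d"
  proof -
    have "P0 - Z = (P0 - Y) + d" by (simp add: d_def)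
    then have "d \<bullet> (P0 - Z) = d \<bullet> ((P0 - Y) + d)" by (simp only:)
    then show ?thesis by (simp only: inner_add_right)
  qed
  have e1: "d \<bullet> (P0 - Y) = fst d \<bullet> (fst P0 - x) + snd d * (sqrt 3 * \<delta>)"
    by (simp add: inner_pair' Y_def)
  have eq1: "d \<bullet> (P0 - Z) = fst d \<bullet> (fst P0 - x) + snd d * (sqrt 3 * \<delta>) + d \<bullet> d"
    using e0 e1 by simp
  have "- (fst d \<bullet> (fst P0 - x)) \<le> norm (fst d) * \<delta>"
    using Cauchy_Schwarz_ineq2[of "fst d" "fst P0 - x"] by (simp add: \<delta>_def norm_minus_commute)
  also have "\<dots> \<le> sqrt 3 * snd d * \<delta>" using fd by (simp add: \<delta>_def mult_right_mono)
  finally have "fst d \<bullet> (fst P0 - x) + snd d * (sqrt 3 * \<delta>) \<ge> 0" by (simp add: algebra_simps)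
  moreover have "d \<bullet> d > 0" using dne by simp
  ultimately have "d \<bullet> (P0 - Z) > 0" using eq1 by linarith
  then show False using dP0 by linarith
qed

lemma top_point:
  assumes xs: "(x, s) \<in> S"
  shows "\<exists>t. (x, t) \<in> frontier S \<and> (\<forall>t'. (x, t') \<in> S \<longrightarrow> t' \<le> t)"
proof -
  define T where "T = snd ` (S \<inter> {P. fst P = x})"
  have "closed {P :: 'a \<times> real. fst P = x}"
    by (intro closed_Collect_eq continuous_intros)
  then have "compact (S \<inter> {P. fst P = x})" by (rule compact_Int_closed[OF cS])
  then have cT: "compact T" unfolding T_def
    by (intro compact_continuous_image continuous_intros)
  have "s \<in> T" using xs unfolding T_def by force
  then have "T \<noteq> {}" by blast
  then obtain t where tT: "t \<in> T" and tmax: "\<forall>y\<in>T. y \<le> t"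
    using compact_attains_sup[OF cT] by blast
  have xt: "(x, t) \<in> S" using tT unfolding T_def by force
  have top: "\<forall>t'. (x, t') \<in> S \<longrightarrow> t' \<le> t"
  proof (intro allI impI)
    fix t' assume "(x, t') \<in> S"
    then have "t' \<in> T" unfolding T_def by force
    then show "t' \<le> t" using tmax by blast
  qed
  have "(x, t) \<notin> interior S"
  proof
    assume "(x, t) \<in> interior S"
    then obtain e where e: "e > 0" "ball (x, t) e \<subseteq> S" using mem_interior by blast
    have "dist (x, t) (x, t + e/2) = e/2" using e by (simp add: dist_Pair_Pair dist_real_def)
    then have "(x, t + e/2) \<in> S" using e by auto
    then have "t + e/2 \<le> t" using top by blast
    then show False using e by simp
  qed
  then have "(x, t) \<in> frontier S" using xt clS by (simp add: frontier_def)
  then show ?thesis using top by blast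
qed

lemma upper_top:
  assumes P: "(x, t) \<in> frontier S" and g: "snd (\<nu> (x, t)) > 0" and W: "(x, t') \<in> S"
  shows "t' \<le> t"
proof -
  have "\<nu> (x, t) \<bullet> ((x, t') - (x, t)) \<le> 0" using hS[OF P W] .
  then have "snd (\<nu> (x, t)) * (t' - t) \<le> 0" by (simp add: inner_pair')
  then show ?thesis using g by (simp add: mult_le_0_iff)
qed

lemma close:
  assumes x: "norm (x - fst P0) < r / 2" and xt: "(x, t) \<in> S"
    and top: "\<forall>t'. (x, t') \<in> S \<longrightarrow> t' \<le> t"
  shows "norm ((x, t) - P0) < r"
proof -
  define \<delta> where "\<delta> = norm (x - fst P0)"
  have "(x, snd P0 - sqrt 3 * \<delta>) \<in> S" using cone[OF x] by (simp add: \<delta>_def)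
  then have lo: "snd P0 - sqrt 3 * \<delta> \<le> t" using top by blast
  have hi: "t \<le> snd P0" using below_top[OF xt] by simp
  have d0: "\<delta> \<ge> 0" by (simp add: \<delta>_def)
  have "(snd P0 - t)^2 \<le> (sqrt 3 * \<delta>)^2"
    by (rule power_mono) (use lo hi in auto)
  also have "\<dots> = 3 * \<delta>^2" by (simp add: power_mult_distrib)
  finally have a: "(t - snd P0)^2 \<le> 3 * \<delta>^2" by (simp add: power2_commute)
  have "(norm ((x, t) - P0))^2 = \<delta>^2 + (t - snd P0)^2"
    using norm_sq_pair[of "(x, t) - P0"] by (simp add: \<delta>_def)
  also have "\<dots> \<le> (2 * \<delta>)^2" using a by (simp add: power_mult_distrib)
  also have "\<dots> < r^2"
    by (rule power_strict_mono) (use x d0 in \<open>auto simp: \<delta>_def\<close>)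
  finally have "(norm ((x, t) - P0))^2 < r^2" .
  moreover have "r \<ge> 0" using x norm_ge_zero[of "x - fst P0"] by linarith
  ultimately show ?thesis by (rule power_less_imp_less_base)
qed

lemma main:
  assumes r: "r > 0" and Dm: "\<forall>P\<in>S. \<forall>W\<in>S. norm (P - W) \<le> Dm"
    and x1: "norm (x1 - fst P0) < r / 4"
    and P2: "(x2, t2) \<in> frontier S" "snd (\<nu> (x2, t2)) > 0"
  shows "\<exists>t1. (x1, t1) \<in> frontier S \<and> snd (\<nu> (x1, t1)) > 0
           \<and> (\<forall>t. (x1, t) \<in> frontier S \<and> snd (\<nu> (x1, t)) > 0 \<longrightarrow> t = t1)
           \<and> \<bar>t1 - t2\<bar> \<le> 4 * Dm / r * norm (x1 - x2)"
proof -
  have x1': "norm (x1 - fst P0) < r / 2" using x1 r by simp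
  obtain t1 where P1: "(x1, t1) \<in> frontier S" and top1: "\<forall>t'. (x1, t') \<in> S \<longrightarrow> t' \<le> t1"
    using top_point[OF cone[OF x1']] by blast
  have cl1: "norm ((x1, t1) - P0) < r" by (rule close[OF x1' fr_in[OF P1] top1])
  have g1: "snd (\<nu> (x1, t1)) > 1/2" by (rule hM[OF P1 cl1])
  have uniq: "\<forall>t. (x1, t) \<in> frontier S \<and> snd (\<nu> (x1, t)) > 0 \<longrightarrow> t = t1"
  proof (intro allI impI)
    fix t assume a: "(x1, t) \<in> frontier S \<and> snd (\<nu> (x1, t)) > 0"
    have "t \<le> t1" using top1 fr_in a by blast
    moreover have "t1 \<le> t" using upper_top[of x1 t t1] a fr_in[OF P1] by blast
    ultimately show "t = t1" by simp
  qed
  obtain b :: 'a where b: "b \<in> Basis" using nonempty_Basis by blast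
  define xb where "xb = fst P0 + (r/4) *\<^sub>R b"
  have nb: "norm (xb - fst P0) = r / 4" using b r by (simp add: xb_def)
  have "(xb, snd P0 - sqrt 3 * norm (xb - fst P0)) \<in> S" by (rule cone) (use nb r in simp)
  then have "norm ((xb, snd P0 - sqrt 3 * (r/4)) - P0) \<le> Dm" using Dm P0S nb by auto
  moreover have "\<bar>snd ((xb, snd P0 - sqrt 3 * (r/4)) - P0)\<bar> \<le> norm ((xb, snd P0 - sqrt 3 * (r/4)) - P0)"
    by (rule abs_snd_le_norm)
  ultimately have Dmb: "sqrt 3 * (r/4) \<le> Dm" by simp
  have K: "sqrt 3 \<le> 4 * Dm / r" using Dmb r by (simp add: field_simps)
  have D0: "Dm \<ge> 0" using Dm P0S by (metis norm_ge_zero order_trans)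
  have bound: "\<bar>t1 - t2\<bar> \<le> 4 * Dm / r * norm (x1 - x2)"
  proof (cases "norm (x1 - x2) \<ge> r / 4")
    case True
    have "\<bar>t1 - t2\<bar> \<le> norm ((x1, t1) - (x2, t2))"
      using abs_snd_le_norm[of "(x1, t1) - (x2, t2)"] by simp
    also have "\<dots> \<le> Dm" using Dm fr_in[OF P1] fr_in[OF P2(1)] by blast
    also have "\<dots> = 4 * Dm / r * (r / 4)" using r by simp
    also have "\<dots> \<le> 4 * Dm / r * norm (x1 - x2)"
      using True D0 r by (intro mult_left_mono) auto
    finally show ?thesis .
  next
    case False
    have "norm (x2 - fst P0) \<le> norm (x2 - x1) + norm (x1 - fst P0)"
      using norm_triangle_ineq[of "x2 - x1" "x1 - fst P0"] by simp
    then have x2': "norm (x2 - fst P0) < r / 2" using False x1 by (simp add: norm_minus_commute)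
    have top2: "\<forall>t'. (x2, t') \<in> S \<longrightarrow> t' \<le> t2" using upper_top[OF P2] by blast
    have cl2: "norm ((x2, t2) - P0) < r" by (rule close[OF x2' fr_in[OF P2(1)] top2])
    have g2: "snd (\<nu> (x2, t2)) > 1/2" by (rule hM[OF P2(1) cl2])
    have a1: "t2 - t1 \<le> sqrt 3 * norm (x2 - x1)" by (rule slope[OF P1 g1 fr_in[OF P2(1)]])
    have a2: "t1 - t2 \<le> sqrt 3 * norm (x1 - x2)" by (rule slope[OF P2(1) g2 fr_in[OF P1]])
    have "\<bar>t1 - t2\<bar> \<le> sqrt 3 * norm (x1 - x2)" using a1 a2 by (simp add: norm_minus_commute)
    also have "\<dots> \<le> 4 * Dm / r * norm (x1 - x2)" using K by (rule mult_right_mono) simp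
    finally show ?thesis .
  qed
  have "snd (\<nu> (x1, t1)) > 0" using g1 by simp
  then show ?thesis using P1 uniq bound by blast
qed

end


lemma modulus_inner:
  fixes \<Omega> :: "'a::euclidean_space set"
  assumes cl: "closed \<Omega>" and cv: "convex \<Omega>" and C1: "C1_boundary \<Omega>"
    and r_mod: "normal_modulus \<Omega> r < sqrt (2 - 2 * \<Theta>)" and Th: "\<Theta> < 1"
    and X1: "X1 \<in> frontier \<Omega>" and X2: "X2 \<in> frontier \<Omega>" and d: "norm (X1 - X2) < r"
  shows "outward_normal \<Omega> X1 \<bullet> outward_normal \<Omega> X2 > \<Theta>"
proof -
  let ?N = "outward_normal \<Omega>"
  let ?A = "{norm (?N Y1 - ?N Y2) | Y1 Y2. Y1 \<in> frontier \<Omega> \<and> Y2 \<in> frontier \<Omega> \<and> norm (Y1 - Y2) < r}"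
  have n1: "norm (?N X) = 1" if "X \<in> frontier \<Omega>" for X
    using outward_normal_char(1)[OF cl cv C1 that] .
  have bdd: "bdd_above ?A"
  proof (rule bdd_aboveI[of _ 2])
    fix y assume "y \<in> ?A"
    then obtain Y1 Y2 where y: "y = norm (?N Y1 - ?N Y2)" "Y1 \<in> frontier \<Omega>" "Y2 \<in> frontier \<Omega>" by blast
    have "norm (?N Y1 - ?N Y2) \<le> norm (?N Y1) + norm (?N Y2)" by (rule norm_triangle_ineq4)
    then show "y \<le> 2" using y n1 by simp
  qed
  have "norm (?N X1 - ?N X2) \<in> ?A" using X1 X2 d by blast
  then have "norm (?N X1 - ?N X2) \<le> Sup ?A" by (rule cSup_upper[OF _ bdd])
  moreover have "Sup ?A = normal_modulus \<Omega> r" unfolding normal_modulus_def by simp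
  ultimately have lt: "norm (?N X1 - ?N X2) < sqrt (2 - 2 * \<Theta>)" using r_mod by linarith
  have "(norm (?N X1 - ?N X2))^2 < (sqrt (2 - 2 * \<Theta>))^2"
    by (rule power_strict_mono[OF lt]) auto
  also have "\<dots> = 2 - 2 * \<Theta>" using Th by simp
  finally have lt2: "(norm (?N X1 - ?N X2))^2 < 2 - 2 * \<Theta>" .
  have i1: "?N X1 \<bullet> ?N X1 = 1" "?N X2 \<bullet> ?N X2 = 1" using n1[OF X1] n1[OF X2] norm_eq_1 by auto
  have "(norm (?N X1 - ?N X2))^2 = ?N X1 \<bullet> ?N X1 + ?N X2 \<bullet> ?N X2 - 2 * (?N X1 \<bullet> ?N X2)"
    by (simp add: power2_norm_eq_inner inner_diff_left inner_diff_right inner_commute[of "?N X2" "?N X1"])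
  then have "(norm (?N X1 - ?N X2))^2 = 2 - 2 * (?N X1 \<bullet> ?N X2)" using i1 by simp
  then show ?thesis using lt2 by linarith
qed

theorem lemma2p10:
  fixes \<Omega> :: "((real^'n) \<times> real) set"
    and Q :: "(real^'n) \<times> real \<Rightarrow> (real^'n) \<times> real"
    and \<Theta> r :: real
    and X0 :: "(real^'n) \<times> real"
  assumes body: "convex_body \<Omega>"
    and C1: "C1_boundary \<Omega>"
    and Theta: "1/2 \<le> \<Theta>" "\<Theta> < 1"
    and r_pos: "r > 0"
    and r_mod: "normal_modulus \<Omega> r < sqrt (2 - 2 * \<Theta>)"
    and X0: "X0 \<in> frontier \<Omega>"
    and Q: "orthogonal_transformation Q"
    and QN: "Q (outward_normal \<Omega> X0) = (0, 1)"
  shows "\<forall>x1 \<in> ball (fst (Q X0)) (r / 4). \<forall>x2 \<in> proj_domain \<Omega> Q X0.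
           \<bar>graph_fun \<Omega> Q X0 x1 - graph_fun \<Omega> Q X0 x2\<bar>
             \<le> 4 * diameter \<Omega> / r * norm (x1 - x2)"
proof -
  have cpt: "compact \<Omega>" and cv: "convex \<Omega>" using body unfolding convex_body_def by auto
  have cl: "closed \<Omega>" using cpt compact_imp_closed by blast
  have bdd: "bounded \<Omega>" using cpt compact_imp_bounded by blast
  let ?N = "outward_normal \<Omega>"
  note nc = outward_normal_char[OF cl cv C1]
  have lin: "linear Q" using Q orthogonal_transformation_linear by blast
  have inj: "inj Q" using Q orthogonal_transformation_inj by blast
  have ip: "\<And>v w. Q v \<bullet> Q w = v \<bullet> w" using Q unfolding orthogonal_transformation_def by blast
  have nq: "\<And>v. norm (Q v) = norm v" using Q orthogonal_transformation_norm by blast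
  have Qd: "\<And>a b. Q (a - b) = Q a - Q b" using lin linear_diff by blast
  define Qi where "Qi = inv Q"
  have QQi: "\<And>P. Q (Qi P) = P" using orthogonal_transformation_surj[OF Q] by (simp add: Qi_def surj_f_inv_f)
  have QiQ: "\<And>X. Qi (Q X) = X" using inj by (simp add: Qi_def inv_f_f)
  define S where "S = Q ` \<Omega>"
  define \<nu> where "\<nu> = (\<lambda>P. Q (?N (Qi P)))"
  define P0 where "P0 = Q X0"
  have frS: "frontier S = Q ` frontier \<Omega>"
  proof -
    have "frontier S = closure S - interior S" by (simp add: frontier_def)
    also have "closure S = Q ` closure \<Omega>" using closure_injective_linear_image[OF lin inj] by (simp add: S_def)
    also have "interior S = Q ` interior \<Omega>" using interior_injective_linear_image[OF lin inj] by (simp add: S_def)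
    also have "Q ` closure \<Omega> - Q ` interior \<Omega> = Q ` (closure \<Omega> - interior \<Omega>)" using inj by (simp add: image_set_diff)
    finally show ?thesis by (simp add: frontier_def)
  qed
  have snd_inner: "\<And>w::(real^'n) \<times> real. snd w = w \<bullet> (0, 1)" by (simp add: inner_pair')
  have snd_nu: "snd (\<nu> (Q X)) = ?N X \<bullet> ?N X0" for X
  proof -
    have "snd (\<nu> (Q X)) = Q (?N X) \<bullet> Q (?N X0)" using QN by (simp add: \<nu>_def QiQ snd_inner)
    then show ?thesis using ip by simp
  qed
  have geo: "geo S \<nu> P0 r"
  proof (unfold_locales)
    have "continuous_on \<Omega> Q" by (rule linear_continuous_on) (simp add: lin linear_conv_bounded_linear[symmetric])
    then show "compact S" unfolding S_def using cpt by (rule compact_continuous_image)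
    show "convex S" unfolding S_def by (rule convex_linear_image[OF lin cv])
  next
    fix P assume "P \<in> frontier S"
    then have X: "Qi P \<in> frontier \<Omega>" using frS QiQ by auto
    show "norm (\<nu> P) = 1" using nc(1)[OF X] nq by (simp add: \<nu>_def)
  next
    fix P W assume P: "P \<in> frontier S" and W: "W \<in> S"
    then obtain X where X: "X \<in> frontier \<Omega>" "P = Q X" using frS by auto
    obtain Y where Y: "Y \<in> \<Omega>" "W = Q Y" using W S_def by auto
    have "\<nu> P \<bullet> (W - P) = Q (?N X) \<bullet> Q (Y - X)" using X Y by (simp add: \<nu>_def QiQ Qd)
    also have "\<dots> = ?N X \<bullet> (Y - X)" by (rule ip)
    also have "\<dots> \<le> 0" using nc(2)[OF X(1)] Y(1) by blast
    finally show "\<nu> P \<bullet> (W - P) \<le> 0" .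
  next
    fix P v assume P: "P \<in> frontier S" and v: "norm v = 1" and sup: "\<forall>W\<in>S. v \<bullet> (W - P) \<le> 0"
    then obtain X where X: "X \<in> frontier \<Omega>" "P = Q X" using frS by auto
    define u where "u = Qi v"
    have Qu: "Q u = v" by (simp add: u_def QQi)
    have nu: "norm u = 1" using v nq[of u] Qu by simp
    have "\<forall>Y\<in>\<Omega>. u \<bullet> (Y - X) \<le> 0"
    proof
      fix Y assume Y: "Y \<in> \<Omega>"
      have "u \<bullet> (Y - X) = Q u \<bullet> Q (Y - X)" by (rule ip[symmetric])
      also have "\<dots> = v \<bullet> (Q Y - P)" using Qu X by (simp add: Qd)
      also have "\<dots> \<le> 0" using sup Y S_def by blast
      finally show "u \<bullet> (Y - X) \<le> 0" .
    qed
    then have "u = ?N X" using nc(3)[OF X(1)] nu by blast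
    then show "v = \<nu> P" using Qu X by (simp add: \<nu>_def QiQ)
  next
    show "P0 \<in> frontier S" using frS X0 by (simp add: P0_def)
    show "\<nu> P0 = (0, 1)" using QN by (simp add: \<nu>_def P0_def QiQ)
  next
    fix P assume P: "P \<in> frontier S" and d: "norm (P - P0) < r"
    then obtain X where X: "X \<in> frontier \<Omega>" "P = Q X" using frS by auto
    have "norm (X - X0) = norm (P - P0)" using X nq[of "X - X0"] by (simp add: P0_def Qd)
    then have "norm (X - X0) < r" using d by simp
    then have "?N X \<bullet> ?N X0 > \<Theta>" by (rule modulus_inner[OF cl cv C1 r_mod Theta(2) X(1) X0])
    then show "snd (\<nu> P) > 1/2" using snd_nu[of X] X Theta(1) by simp
  qed
  have Dm: "\<forall>P\<in>S. \<forall>W\<in>S. norm (P - W) \<le> diameter \<Omega>"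
  proof (intro ballI)
    fix P W assume "P \<in> S" "W \<in> S"
    then obtain X Y where XY: "X \<in> \<Omega>" "Y \<in> \<Omega>" "P = Q X" "W = Q Y" using S_def by auto
    have "norm (P - W) = dist X Y" using XY nq[of "X - Y"] by (simp add: Qd dist_norm)
    also have "\<dots> \<le> diameter \<Omega>" by (rule diameter_bounded_bound[OF bdd XY(1,2)])
    finally show "norm (P - W) \<le> diameter \<Omega>" .
  qed
  have upper: "(x, t) \<in> Q ` upper_boundary \<Omega> X0 \<longleftrightarrow> (x, t) \<in> frontier S \<and> snd (\<nu> (x, t)) > 0" for x t
  proof
    assume "(x, t) \<in> Q ` upper_boundary \<Omega> X0"
    then obtain X where X: "X \<in> frontier \<Omega>" "?N X \<bullet> ?N X0 > 0" "(x, t) = Q X"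
      unfolding upper_boundary_def by auto
    then show "(x, t) \<in> frontier S \<and> snd (\<nu> (x, t)) > 0" using frS snd_nu[of X] by auto
  next
    assume a: "(x, t) \<in> frontier S \<and> snd (\<nu> (x, t)) > 0"
    then obtain X where X: "X \<in> frontier \<Omega>" "(x, t) = Q X" using frS by auto
    have "?N X \<bullet> ?N X0 > 0" using a X snd_nu[of X] by simp
    then have "X \<in> upper_boundary \<Omega> X0" using X unfolding upper_boundary_def by simp
    then show "(x, t) \<in> Q ` upper_boundary \<Omega> X0" using X by blast
  qed
  show ?thesis
  proof (intro ballI)
    fix x1 x2 assume x1: "x1 \<in> ball (fst (Q X0)) (r / 4)" and x2: "x2 \<in> proj_domain \<Omega> Q X0"
    from x2 obtain X2 where X2: "X2 \<in> upper_boundary \<Omega> X0" "x2 = fst (Q X2)"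
      unfolding proj_domain_def by auto
    define t2 where "t2 = snd (Q X2)"
    have QX2: "Q X2 = (x2, t2)" by (simp add: X2 t2_def)
    have m2: "(x2, t2) \<in> Q ` upper_boundary \<Omega> X0" using X2(1) QX2 by (metis image_eqI)
    then have P2: "(x2, t2) \<in> frontier S" "snd (\<nu> (x2, t2)) > 0" using upper by auto
    have x1': "norm (x1 - fst P0) < r / 4" using x1 by (simp add: P0_def dist_norm norm_minus_commute)
    obtain t1 where t1: "(x1, t1) \<in> frontier S" "snd (\<nu> (x1, t1)) > 0"
        "\<forall>t. (x1, t) \<in> frontier S \<and> snd (\<nu> (x1, t)) > 0 \<longrightarrow> t = t1"
        "\<bar>t1 - t2\<bar> \<le> 4 * diameter \<Omega> / r * norm (x1 - x2)"
      using geo.main[OF geo r_pos Dm x1' P2] by blast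
    have g1: "graph_fun \<Omega> Q X0 x1 = t1"
      unfolding graph_fun_def
    proof (rule the_equality)
      show "(x1, t1) \<in> Q ` upper_boundary \<Omega> X0" using upper t1(1,2) by blast
      fix t assume "(x1, t) \<in> Q ` upper_boundary \<Omega> X0"
      then show "t = t1" using upper t1(3) by blast
    qed
    have g2: "graph_fun \<Omega> Q X0 x2 = t2"
      unfolding graph_fun_def
    proof (rule the_equality)
      show "(x2, t2) \<in> Q ` upper_boundary \<Omega> X0" by (rule m2)
      fix t assume "(x2, t) \<in> Q ` upper_boundary \<Omega> X0"
      then have a: "(x2, t) \<in> frontier S" "snd (\<nu> (x2, t)) > 0" using upper by auto
      have "t \<le> t2" by (rule geo.upper_top[OF geo P2 geo.fr_in[OF geo a(1)]])
      moreover have "t2 \<le> t" by (rule geo.upper_top[OF geo a geo.fr_in[OF geo P2(1)]])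
      ultimately show "t = t2" by simp
    qed
    show "\<bar>graph_fun \<Omega> Q X0 x1 - graph_fun \<Omega> Q X0 x2\<bar> \<le> 4 * diameter \<Omega> / r * norm (x1 - x2)"
      using g1 g2 t1(4) by simp
  qed
qed

end
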